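(* Let $Q$ be a proper quasi-ideal of a finite-dimensional Lie algebra $L$ over a field $F$ which is modular* in $L$. Then $Q$ is a strong quasi-ideal of $L$; consequently either $Q$ is a strong ideal of $L$, or $L$ is almost abelian, or $F$ has characteristic two and there is an isomorphism $L\cong K$ carrying $Q$ onto $Fc$.
   Context: $K$ denotes the three-dimensional Lie algebra with basis $a,b,c$ and products $[a,b]=c$, $[b,c]=b$, $[a,c]=a$. $\langle U,B\rangle$ denotes the subalgebra generated by $U\cup B$. A subalgebra $Q$ is a quasi-ideal of $L$ if $[Q,V]\subseteq Q+V$ for every subspace $V$ of $L$. A subalgebra $U$ is modular* in $L$ if $\langle U,B\rangle\cap C=\langle B,U\cap C\rangle$ for all subalgebras $B\subseteq C$ of $L$, and $\langle U\cap B,C\rangle=\langle B,C\rangle\cap U$ for all subalgebras $B,C$ of $L$ with $C\subseteq U$. A subalgebra $U$ of $L$ is a strong ideal (respectively strong quasi-ideal) of $L$ if every one-dimensional subalgebra of $U$ is an ideal (respectively quasi-ideal) of $L$. $L$ is almost abelian if $L=L^2\oplus Fx$ for some $x$, where $L^2=[L,L]$ is abelian and $\mathrm{ad}\,x$ acts as the identity map on $L^2$. *)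

theory Defs
  imports Main "HOL.Vector_Spaces" "HOL-Library.Product_Plus"
begin

text \<open>A Lie algebra L over a field 'f is modelled as the whole carrier type 'v,
  with scalar multiplication scl and Lie bracket br.\<close>

definition lie_algebra :: "('f::field \<Rightarrow> 'v::ab_group_add \<Rightarrow> 'v) \<Rightarrow> ('v \<Rightarrow> 'v \<Rightarrow> 'v) \<Rightarrow> bool" where
  "lie_algebra scl br \<longleftrightarrow> Vector_Spaces.vector_space scl
     \<and> (\<forall>x y z. br (x + y) z = br x z + br y z)
     \<and> (\<forall>x y z. br x (y + z) = br x y + br x z)
     \<and> (\<forall>r x y. br (scl r x) y = scl r (br x y))
     \<and> (\<forall>r x y. br x (scl r y) = scl r (br x y))
     \<and> (\<forall>x. br x x = 0)
     \<and> (\<forall>x y z. br x (br y z) + br y (br z x) + br z (br x y) = 0)"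

definition fin_dim :: "('f::field \<Rightarrow> 'v::ab_group_add \<Rightarrow> 'v) \<Rightarrow> bool" where
  "fin_dim scl \<longleftrightarrow> (\<exists>B. finite B \<and> Modules.module.span scl B = UNIV)"

definition subalgebra :: "('f::field \<Rightarrow> 'v::ab_group_add \<Rightarrow> 'v) \<Rightarrow> ('v \<Rightarrow> 'v \<Rightarrow> 'v) \<Rightarrow> 'v set \<Rightarrow> bool" where
  "subalgebra scl br U \<longleftrightarrow> Modules.module.subspace scl U \<and> (\<forall>x\<in>U. \<forall>y\<in>U. br x y \<in> U)"

definition gen :: "('f::field \<Rightarrow> 'v::ab_group_add \<Rightarrow> 'v) \<Rightarrow> ('v \<Rightarrow> 'v \<Rightarrow> 'v) \<Rightarrow> 'v set \<Rightarrow> 'v set" where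
  "gen scl br S = \<Inter>{U. subalgebra scl br U \<and> S \<subseteq> U}"

definition brset :: "('f::field \<Rightarrow> 'v::ab_group_add \<Rightarrow> 'v) \<Rightarrow> ('v \<Rightarrow> 'v \<Rightarrow> 'v) \<Rightarrow> 'v set \<Rightarrow> 'v set \<Rightarrow> 'v set" where
  "brset scl br A B = Modules.module.span scl {br a b | a b. a \<in> A \<and> b \<in> B}"

definition setsum :: "'v::ab_group_add set \<Rightarrow> 'v set \<Rightarrow> 'v set" where
  "setsum A B = {a + b | a b. a \<in> A \<and> b \<in> B}"

definition quasi_ideal :: "('f::field \<Rightarrow> 'v::ab_group_add \<Rightarrow> 'v) \<Rightarrow> ('v \<Rightarrow> 'v \<Rightarrow> 'v) \<Rightarrow> 'v set \<Rightarrow> bool" where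
  "quasi_ideal scl br Q \<longleftrightarrow> subalgebra scl br Q \<and>
     (\<forall>V. Modules.module.subspace scl V \<longrightarrow> brset scl br Q V \<subseteq> setsum Q V)"

definition lie_ideal :: "('f::field \<Rightarrow> 'v::ab_group_add \<Rightarrow> 'v) \<Rightarrow> ('v \<Rightarrow> 'v \<Rightarrow> 'v) \<Rightarrow> 'v set \<Rightarrow> bool" where
  "lie_ideal scl br I \<longleftrightarrow> subalgebra scl br I \<and> brset scl br I UNIV \<subseteq> I"

definition modular_star :: "('f::field \<Rightarrow> 'v::ab_group_add \<Rightarrow> 'v) \<Rightarrow> ('v \<Rightarrow> 'v \<Rightarrow> 'v) \<Rightarrow> 'v set \<Rightarrow> bool" where
  "modular_star scl br U \<longleftrightarrow> subalgebra scl br U \<and>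
     (\<forall>B C. subalgebra scl br B \<and> subalgebra scl br C \<and> B \<subseteq> C \<longrightarrow>
        gen scl br (U \<union> B) \<inter> C = gen scl br (B \<union> (U \<inter> C))) \<and>
     (\<forall>B C. subalgebra scl br B \<and> subalgebra scl br C \<and> C \<subseteq> U \<longrightarrow>
        gen scl br ((U \<inter> B) \<union> C) = gen scl br (B \<union> C) \<inter> U)"

definition strong_ideal :: "('f::field \<Rightarrow> 'v::ab_group_add \<Rightarrow> 'v) \<Rightarrow> ('v \<Rightarrow> 'v \<Rightarrow> 'v) \<Rightarrow> 'v set \<Rightarrow> bool" where
  "strong_ideal scl br U \<longleftrightarrow> subalgebra scl br U \<and>
     (\<forall>S. subalgebra scl br S \<and> S \<subseteq> U \<and> Vector_Spaces.vector_space.dim scl S = 1 \<longrightarrow> lie_ideal scl br S)"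

definition strong_quasi_ideal :: "('f::field \<Rightarrow> 'v::ab_group_add \<Rightarrow> 'v) \<Rightarrow> ('v \<Rightarrow> 'v \<Rightarrow> 'v) \<Rightarrow> 'v set \<Rightarrow> bool" where
  "strong_quasi_ideal scl br U \<longleftrightarrow> subalgebra scl br U \<and>
     (\<forall>S. subalgebra scl br S \<and> S \<subseteq> U \<and> Vector_Spaces.vector_space.dim scl S = 1 \<longrightarrow> quasi_ideal scl br S)"

definition almost_abelian :: "('f::field \<Rightarrow> 'v::ab_group_add \<Rightarrow> 'v) \<Rightarrow> ('v \<Rightarrow> 'v \<Rightarrow> 'v) \<Rightarrow> bool" where
  "almost_abelian scl br \<longleftrightarrow> (let L2 = brset scl br UNIV UNIV in
     (\<forall>u\<in>L2. \<forall>v\<in>L2. br u v = 0) \<and>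
     (\<exists>x. L2 \<inter> Modules.module.span scl {x} = {0} \<and> setsum L2 (Modules.module.span scl {x}) = UNIV \<and>
          (\<forall>u\<in>L2. br x u = u)))"

text \<open>The Lie algebra K on 'f \<times> 'f \<times> 'f, coordinates w.r.t. the basis a, b, c:
  (x1,x2,x3) = x1 a + x2 b + x3 c, with [a,b]=c, [b,c]=b, [a,c]=a.\<close>
definition K_scale :: "'f::field \<Rightarrow> 'f \<times> 'f \<times> 'f \<Rightarrow> 'f \<times> 'f \<times> 'f" where
  "K_scale r x = (case x of (x1, x2, x3) \<Rightarrow> (r * x1, r * x2, r * x3))"

definition K_br :: "'f::field \<times> 'f \<times> 'f \<Rightarrow> 'f \<times> 'f \<times> 'f \<Rightarrow> 'f \<times> 'f \<times> 'f" where
  "K_br x y = (case x of (x1, x2, x3) \<Rightarrow> case y of (y1, y2, y3) \<Rightarrow>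
     (x1 * y3 - x3 * y1, x2 * y3 - x3 * y2, x1 * y2 - x2 * y1))"

definition lie_iso :: "('f::field \<Rightarrow> 'v::ab_group_add \<Rightarrow> 'v) \<Rightarrow> ('v \<Rightarrow> 'v \<Rightarrow> 'v) \<Rightarrow>
    ('f \<Rightarrow> 'w::ab_group_add \<Rightarrow> 'w) \<Rightarrow> ('w \<Rightarrow> 'w \<Rightarrow> 'w) \<Rightarrow> ('v \<Rightarrow> 'w) \<Rightarrow> bool" where
  "lie_iso scl br scl' br' \<phi> \<longleftrightarrow> bij \<phi> \<and> Vector_Spaces.linear scl scl' \<phi> \<and>
     (\<forall>x y. \<phi> (br x y) = br' (\<phi> x) (\<phi> y))"

end

theory Submission
  imports Defs
begin

locale lieA = vector_space scl for scl :: "'f::field \<Rightarrow> 'v::ab_group_add \<Rightarrow> 'v" (infixr \<open>*s\<close> 75) +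
  fixes br :: "'v \<Rightarrow> 'v \<Rightarrow> 'v"
  assumes lie: "lie_algebra scl br"
begin

lemma br_addL: "br (x + y) z = br x z + br y z" using lie by (simp add: lie_algebra_def)
lemma br_addR: "br x (y + z) = br x y + br x z" using lie by (simp add: lie_algebra_def)
lemma br_sclL: "br (r *s x) y = r *s br x y" using lie by (simp add: lie_algebra_def)
lemma br_sclR: "br x (r *s y) = r *s br x y" using lie by (simp add: lie_algebra_def)
lemma br_self[simp]: "br x x = 0" using lie by (simp add: lie_algebra_def)
lemma jacobi: "br x (br y z) + br y (br z x) + br z (br x y) = 0" using lie by (simp add: lie_algebra_def)

lemma br_0L[simp]: "br 0 y = 0" using br_addL[of 0 0 y] by simp
lemma br_0R[simp]: "br y 0 = 0" using br_addR[of y 0 0] by simp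
lemma br_anti: "br y x = - br x y"
proof -
  have "br x x + br y x + (br x y + br y y) = 0" using br_self[of "x+y"] by (simp only: br_addL br_addR)
  hence "br y x + br x y = 0" by simp
  hence "br x y + br y x = 0" by (simp only: add.commute)
  thus ?thesis by (rule sym[OF minus_unique])
qed
lemma br_negL: "br (- x) y = - br x y"
proof -
  have "br x y + br (- x) y = 0" using br_addL[of x "-x" y] by simp
  thus ?thesis by (rule sym[OF minus_unique])
qed
lemma br_negR: "br y (- x) = - br y x"
proof -
  have "br y x + br y (- x) = 0" using br_addR[of y x "-x"] by simp
  thus ?thesis by (rule sym[OF minus_unique])
qed
lemma br_diffL: "br (x - y) z = br x z - br y z" by (simp only: diff_conv_add_uminus br_addL br_negL)
lemma br_diffR: "br z (x - y) = br z x - br z y" by (simp only: diff_conv_add_uminus br_addR br_negR)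

lemmas brs = br_addL br_addR br_sclL br_sclR br_diffL br_diffR br_negL br_negR

lemma subalg_UNIV: "subalgebra scl br UNIV" by (simp add: subalgebra_def)

lemma gen_sub: "subalgebra scl br (gen scl br S)"
  unfolding subalgebra_def gen_def subspace_def by auto
lemma gen_sup: "S \<subseteq> gen scl br S" unfolding gen_def by auto
lemma gen_min: "subalgebra scl br U \<Longrightarrow> S \<subseteq> U \<Longrightarrow> gen scl br S \<subseteq> U" unfolding gen_def by auto
lemma gen_eq: "subalgebra scl br U \<Longrightarrow> gen scl br U = U" using gen_sup gen_min by blast

lemma subalg_span1: "subalgebra scl br (span {v})"
proof -
  have "subspace (span {v})" by simp
  moreover have "\<forall>x\<in>span {v}. \<forall>y\<in>span {v}. br x y \<in> span {v}"
    by (auto simp: span_singleton brs)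
  ultimately show ?thesis unfolding subalgebra_def by blast
qed

lemma span2: "w \<in> span {a, b} \<longleftrightarrow> (\<exists>s t. w = s *s a + t *s b)"
  by (auto simp: span_insert span_singleton algebra_simps)


lemma sub_diff: "subspace S \<Longrightarrow> x \<in> S \<Longrightarrow> y \<in> S \<Longrightarrow> x - y \<in> S"
  by (metis subspace_diff)

lemma step1a:
  assumes qi: "quasi_ideal scl br Q" and ms: "modular_star scl br Q"
    and q: "q \<in> Q" and y: "y \<notin> Q"
  shows "\<exists>s t. br q y = s *s q + t *s y"
proof -
  have sQ: "subalgebra scl br Q" using qi by (simp add: quasi_ideal_def)
  hence subQ: "subspace Q" by (simp add: subalgebra_def)
  define B where "B = span {y}"
  define C where "C = span {q}"
  have CQ: "C \<subseteq> Q" unfolding C_def using q subQ by (simp add: span_minimal)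
  have QB: "Q \<inter> B = {0}"
  proof (rule set_eqI, rule iffI)
    fix w :: 'v assume "w \<in> Q \<inter> B"
    then obtain k where w: "w = k *s y" "w \<in> Q" by (auto simp: B_def span_singleton)
    show "w \<in> {0}"
    proof (cases "k = 0")
      case False
      have "(inverse k) *s w \<in> Q" by (metis subQ w(2) subspace_scale)
      hence "y \<in> Q" using w False by simp
      with y show ?thesis by simp
    qed (use w in simp)
  next
    fix w :: 'v assume "w \<in> {0}" thus "w \<in> Q \<inter> B" using subQ by (simp add: B_def span_zero subspace_0)
  qed
  have m2: "\<forall>B C. subalgebra scl br B \<and> subalgebra scl br C \<and> C \<subseteq> Q \<longrightarrow>
        gen scl br ((Q \<inter> B) \<union> C) = gen scl br (B \<union> C) \<inter> Q"
    using ms unfolding modular_star_def by (elim conjE)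
  have sB: "subalgebra scl br B" and sC: "subalgebra scl br C" unfolding B_def C_def by (rule subalg_span1)+
  have "gen scl br ((Q \<inter> B) \<union> C) = gen scl br (B \<union> C) \<inter> Q"
    using m2 sB sC CQ by blast
  moreover have "(Q \<inter> B) \<union> C = C" using QB by (auto simp: C_def span_zero)
  ultimately have GC: "gen scl br (B \<union> C) \<inter> Q = C" using gen_eq[OF sC] by simp
  have "br q y \<in> {br a b |a b. a \<in> Q \<and> b \<in> B}" using q span_base[of y "{y}"] by (auto simp: B_def)
  hence "br q y \<in> brset scl br Q B"
    unfolding brset_def by (rule span_base)
  also have "\<dots> \<subseteq> setsum Q B" using qi unfolding quasi_ideal_def B_def by simp
  finally obtain q1 b where qb: "br q y = q1 + b" "q1 \<in> Q" "b \<in> B" by (auto simp: setsum_def)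
  then obtain k where bk: "b = k *s y" by (auto simp: B_def span_singleton)
  let ?G = "gen scl br (B \<union> C)"
  have sG: "subalgebra scl br ?G" by (rule gen_sub)
  hence subG: "subspace ?G" by (simp add: subalgebra_def)
  have "B \<union> C \<subseteq> ?G" by (rule gen_sup)
  hence yG: "y \<in> ?G" and qG: "q \<in> ?G" by (auto simp: B_def C_def intro: span_base)
  have "br q y \<in> ?G" using sG yG qG by (simp add: subalgebra_def)
  moreover have "b \<in> ?G" using subG yG bk by (simp add: subspace_scale)
  ultimately have "br q y - b \<in> ?G" by (rule sub_diff[OF subG])
  hence "q1 \<in> ?G" using qb by simp
  hence "q1 \<in> C" using GC qb by blast
  then obtain s where "q1 = s *s q" by (auto simp: C_def span_singleton)
  thus ?thesis using qb bk by blast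
qed

lemma step1:
  assumes qi: "quasi_ideal scl br Q" and ms: "modular_star scl br Q" and nU: "Q \<noteq> UNIV"
    and q: "q \<in> Q"
  shows "\<exists>s t. br q y = s *s q + t *s y"
proof (cases "y \<in> Q")
  case False thus ?thesis using step1a[OF qi ms q] by blast
next
  case True
  have sQ: "subalgebra scl br Q" using qi by (simp add: quasi_ideal_def)
  hence subQ: "subspace Q" by (simp add: subalgebra_def)
  obtain z where z: "z \<notin> Q" using nU by blast
  have yz: "y + z \<notin> Q"
  proof
    assume "y + z \<in> Q" hence "(y + z) - y \<in> Q" using sub_diff[OF subQ _ True] by blast
    with z show False by simp
  qed
  obtain a b where ab: "br q z = a *s q + b *s z" using step1a[OF qi ms q z] by blast
  obtain c d where cd: "br q (y + z) = c *s q + d *s (y + z)" using step1a[OF qi ms q yz] by blast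
  have e: "br q y = (c - a) *s q + d *s y + (d - b) *s z"
    using ab cd by (simp add: brs algebra_simps)
  have "br q y \<in> Q" using sQ q True by (simp add: subalgebra_def)
  moreover have "(c - a) *s q + d *s y \<in> Q" using q True subQ by (simp add: subspace_add subspace_scale)
  ultimately have "br q y - ((c - a) *s q + d *s y) \<in> Q" by (rule sub_diff[OF subQ])
  moreover have "br q y - ((c - a) *s q + d *s y) = (d - b) *s z" using e by simp
  ultimately have dz: "(d - b) *s z \<in> Q" by simp
  have "d = b"
  proof (rule ccontr)
    assume "d \<noteq> b"
    have "inverse (d - b) *s ((d - b) *s z) \<in> Q" using dz subQ by (rule subspace_scale[rotated])
    hence "z \<in> Q" using \<open>d \<noteq> b\<close> by simp
    with z show False by simp
  qed
  thus ?thesis using e by auto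
qed

end
context lieA begin

lemma step2:
  assumes Px: "\<forall>y. \<exists>s t. br x y = s *s x + t *s y" and y0: "br x y0 \<notin> span {x}"
  shows "\<exists>l. l \<noteq> 0 \<and> (\<forall>y. \<exists>a. br x y = a *s x + l *s y)"
proof -
  obtain a0 b where ab: "br x y0 = a0 *s x + b *s y0" using Px by blast
  have y0x: "\<And>c. y0 \<noteq> c *s x"
  proof
    fix c assume "y0 = c *s x"
    hence "br x y0 = 0" by (simp add: brs)
    with y0 show False by (simp add: span_zero)
  qed
  have b0: "b \<noteq> 0"
  proof
    assume "b = 0" hence "br x y0 = a0 *s x" using ab by simp
    hence "br x y0 \<in> span {x}" by (metis span_base singletonI span_scale)
    with y0 show False by simp
  qed
  have "\<forall>y. \<exists>a. br x y = a *s x + b *s y"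
  proof
    fix y
    obtain a1 b1 where e1: "br x y = a1 *s x + b1 *s y" using Px by blast
    obtain a2 b2 where e2: "br x (y + y0) = a2 *s x + b2 *s (y + y0)" using Px by blast
    have "a2 *s x + b2 *s (y + y0) = a1 *s x + b1 *s y + (a0 *s x + b *s y0)"
      using e1 e2 ab by (simp add: brs)
    hence E: "(b2 - b1) *s y + (b2 - b) *s y0 = (a1 + a0 - a2) *s x"
      by (simp add: algebra_simps)
    show "\<exists>a. br x y = a *s x + b *s y"
    proof (cases "b2 = b1")
      case False
      define s where "s = inverse (b2 - b1) * (a1 + a0 - a2)"
      define t where "t = - inverse (b2 - b1) * (b2 - b)"
      have "inverse (b2 - b1) *s ((b2 - b1) *s y + (b2 - b) *s y0) = inverse (b2 - b1) *s ((a1 + a0 - a2) *s x)"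
        using E by simp
      hence "y + (inverse (b2 - b1) * (b2 - b)) *s y0 = s *s x"
        using False by (simp add: scale_right_distrib s_def)
      hence ys: "y = s *s x + t *s y0" unfolding t_def by (simp add: algebra_simps)
      have "br x y = t *s br x y0" using ys by (simp add: brs)
      also have "\<dots> = (t * a0 - b * s) *s x + b *s y"
        using ab ys by (simp add: algebra_simps)
      finally show ?thesis by blast
    next
      case True
      show ?thesis
      proof (cases "b1 = b")
        case True thus ?thesis using e1 by blast
      next
        case False
        with \<open>b2 = b1\<close> have nz: "b2 - b \<noteq> 0" by simp
        have "(b2 - b) *s y0 = (a1 + a0 - a2) *s x" using E \<open>b2 = b1\<close> by simp
        hence "inverse (b2 - b) *s ((b2 - b) *s y0) = inverse (b2 - b) *s ((a1 + a0 - a2) *s x)" by simp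
        hence "y0 = (inverse (b2 - b) * (a1 + a0 - a2)) *s x" using nz by simp
        with y0x show ?thesis by blast
      qed
    qed
  qed
  with b0 show ?thesis by blast
qed

lemma normalize:
  assumes "l \<noteq> 0" "\<forall>y. \<exists>a. br x y = a *s x + l *s y"
  shows "\<forall>y. \<exists>a. br (inverse l *s x) y = a *s (inverse l *s x) + y"
proof
  fix y
  obtain a where "br x y = a *s x + l *s y" using assms by blast
  hence "br (inverse l *s x) y = inverse l *s (a *s x) + y" using assms(1) by (simp add: brs scale_right_distrib)
  also have "\<dots> = a *s (inverse l *s x) + y" by (simp add: mult.commute)
  finally show "\<exists>a'. br (inverse l *s x) y = a' *s (inverse l *s x) + y" by blast
qed


definition NN where "NN x = {n. br x n = n}"

lemma NN_sub: "subspace (NN x)"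
  unfolding NN_def subspace_def by (auto simp: brs)

lemma L1:
  assumes H: "\<forall>y. \<exists>a. br x y = a *s x + y"
  shows "br x y \<in> NN x" and "\<exists>a. y = br x y - a *s x"
proof -
  obtain a where e: "br x y = a *s x + y" using H by blast
  have "br x (br x y) = br x y" by (simp add: e brs)
  thus "br x y \<in> NN x" by (simp add: NN_def)
  show "\<exists>a. y = br x y - a *s x" by (rule exI[of _ a]) (simp add: e)
qed

lemma L2:
  assumes x0: "x \<noteq> 0" and H: "\<forall>y. \<exists>a. br x y = a *s x + y"
    and n: "n \<in> NN x" and m: "m \<in> NN x"
  shows "\<exists>c. br n m = c *s x \<and> c + c = 0"
proof -
  have bn: "br x n = n" and bm: "br x m = m" using n m by (auto simp: NN_def)
  have J: "br x (br n m) + br n (br m x) + br m (br x n) = 0" by (rule jacobi)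
  have "br m x = - m" using bm br_anti[of m x] by simp
  hence f1: "br n (br m x) = - br n m" by (simp add: br_negR)
  have f2: "br m (br x n) = - br n m" using bn br_anti[of n m] by simp
  have h: "br x (br n m) + - br n m + - br n m = 0" using J unfolding f1 f2 .
  have "br x (br n m) = (br x (br n m) + - br n m + - br n m) + br n m + br n m" by simp
  hence J2: "br x (br n m) = br n m + br n m" unfolding h by simp
  obtain c where e: "br x (br n m) = c *s x + br n m" using H by blast
  have nm: "br n m = c *s x" using e J2 by simp
  have "br x (br n m) = 0" unfolding nm by (simp add: brs)
  hence "c *s x + c *s x = 0" using J2 nm by simp
  hence "(c + c) *s x = 0" by (simp only: scale_left_distrib)
  hence "c + c = 0" using x0 scale_eq_0_iff by blast
  with nm show ?thesis by blast
qed

lemma NN_x: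
  assumes "k *s x \<in> NN x" shows "k *s x = 0"
  using assms by (simp add: NN_def brs)

lemma L3:
  assumes x0: "x \<noteq> 0" and H: "\<forall>y. \<exists>a. br x y = a *s x + y"
    and ab: "\<forall>n\<in>NN x. \<forall>m\<in>NN x. br n m = 0"
  shows "almost_abelian scl br"
proof -
  have L2eq: "brset scl br UNIV UNIV = NN x"
  proof
    show "brset scl br UNIV UNIV \<subseteq> NN x"
      unfolding brset_def
    proof (rule span_minimal[OF _ NN_sub], clarify)
      fix u v
      obtain a where a: "u = br x u - a *s x" using L1[OF H] by blast
      obtain b where b: "v = br x v - b *s x" using L1[OF H] by blast
      have nu: "br x u \<in> NN x" and nv: "br x v \<in> NN x" using L1[OF H] by auto
      hence bu: "br x (br x u) = br x u" and bv: "br x (br x v) = br x v" by (auto simp: NN_def)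
      have "br u v = br (br x u - a *s x) (br x v - b *s x)" using a b by simp
      also have "\<dots> = br (br x u) (br x v) - b *s br (br x u) x - a *s br x (br x v)"
        by (simp add: brs)
      also have "\<dots> = b *s br x u - a *s br x v"
        using ab nu nv bu bv br_anti[of "br x u" x] by simp
      finally have "br u v = b *s br x u - a *s br x v" .
      moreover have "b *s br x u - a *s br x v \<in> NN x"
        using nu nv NN_sub by (simp add: subspace_diff subspace_scale)
      ultimately show "br u v \<in> NN x" by simp
    qed
  next
    show "NN x \<subseteq> brset scl br UNIV UNIV"
    proof
      fix n assume "n \<in> NN x"
      hence "n = br x n" by (simp add: NN_def)
      hence "n \<in> {br a b |a b. a \<in> UNIV \<and> b \<in> UNIV}" by blast
      thus "n \<in> brset scl br UNIV UNIV" unfolding brset_def by (rule span_base)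
    qed
  qed
  have c1: "NN x \<inter> span {x} = {0}"
  proof (rule set_eqI, rule iffI)
    fix w :: 'v assume "w \<in> NN x \<inter> span {x}"
    then obtain k where "w = k *s x" "k *s x \<in> NN x" by (auto simp: span_singleton)
    thus "w \<in> {0}" using NN_x by simp
  next
    fix w :: 'v assume "w \<in> {0}" thus "w \<in> NN x \<inter> span {x}" using NN_sub by (simp add: subspace_0 span_zero)
  qed
  have c2: "setsum (NN x) (span {x}) = UNIV"
  proof (rule set_eqI, simp add: setsum_def)
    fix y
    obtain a where a: "y = br x y - a *s x" using L1[OF H] by blast
    have "br x y \<in> NN x" using L1[OF H] by blast
    moreover have "(- a) *s x \<in> span {x}" by (rule span_scale, rule span_base) simp
    moreover have "y = br x y + (- a) *s x" using a by simp
    ultimately show "\<exists>a b. y = a + b \<and> a \<in> NN x \<and> b \<in> span {x}" by blast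
  qed
  have c3: "\<forall>u\<in>NN x. br x u = u" by (simp add: NN_def)
  show ?thesis unfolding almost_abelian_def Let_def L2eq using ab c1 c2 c3 by blast
qed


lemma vs_self: "vector_space scl" by (simp add: vector_space_def vector_space_assms)

lemma L4:
  assumes x0: "x \<noteq> 0" and H: "\<forall>y. \<exists>a. br x y = a *s x + y"
    and two: "(2::'f) = 0" and n: "n \<in> NN x" and m: "m \<in> NN x" and nm: "br n m = x"
    and subQ: "subspace Q" and xQ: "x \<in> Q"
    and PQ: "\<forall>q\<in>Q. \<forall>y. \<exists>s t. br q y = s *s q + t *s y"
  shows "\<exists>\<phi>. lie_iso scl br K_scale K_br \<phi> \<and> \<phi> ` Q = {(0, 0, t) | t. True}"
proof -
  have vneg: "\<And>v::'v. - v = v"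
  proof -
    fix v :: 'v
    have "v + v = (2::'f) *s v" by (metis one_add_one scale_left_distrib scale_one)
    hence "v + v = 0" using two by simp
    thus "- v = v" by (metis minus_unique)
  qed
  have fneg: "\<And>a::'f. - a = a"
  proof -
    fix a :: 'f
    have "a + a = 2 * a" by simp
    hence "a + a = 0" using two by simp
    thus "- a = a" by (metis minus_unique)
  qed
  have fdiff: "a - b = a + b" for a b :: 'f
  proof -
    have "a - b = a + - b" by (rule diff_conv_add_uminus)
    also have "\<dots> = a + b" by (simp only: fneg)
    finally show ?thesis .
  qed
  have xn: "br x n = n" and xm: "br x m = m" using n m by (auto simp: NN_def)
  have nx: "br n x = n" using xn br_anti[of x n] vneg by simp
  have mx: "br m x = m" using xm br_anti[of x m] vneg by simp
  have mn: "br m n = x" using nm br_anti[of n m] vneg by simp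
  note tab = xn xm nx mx mn nm
  have spanN: "\<And>p. p \<in> NN x \<Longrightarrow> \<exists>s t. p = s *s n + t *s m"
  proof -
    fix p assume p: "p \<in> NN x"
    obtain c1 where c1: "br m p = c1 *s x" using L2[OF x0 H m p] by blast
    obtain c2 where c2: "br p n = c2 *s x" using L2[OF x0 H p n] by blast
    have px: "br p x = p" using p br_anti[of x p] vneg by (simp add: NN_def)
    have "br n (br m p) + br m (br p n) + br p (br n m) = 0" by (rule jacobi)
    hence "c1 *s n + c2 *s m + p = 0" unfolding c1 c2 nm by (simp add: brs tab px)
    hence "p + (c1 *s n + c2 *s m) = 0" by (simp only: add.commute)
    hence "p = - (c1 *s n + c2 *s m)" by (simp only: eq_neg_iff_add_eq_0)
    hence "p = c1 *s n + c2 *s m" using vneg by simp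
    thus "\<exists>s t. p = s *s n + t *s m" by blast
  qed
  define \<psi> where "\<psi> = (\<lambda>(a::'f, b::'f, c::'f). a *s n + b *s m + c *s x)"
  have psi: "\<psi> (a, b, c) = a *s n + b *s m + c *s x" for a b c by (simp add: \<psi>_def)
  have surj: "surj \<psi>"
  proof (rule surjI[where f = "\<lambda>y. SOME p. \<psi> p = y"])
    fix y
    obtain a where a: "y = br x y - a *s x" using L1[OF H] by blast
    obtain s t where st: "br x y = s *s n + t *s m" using spanN L1(1)[OF H] by blast
    have "\<psi> (s, t, - a) = y" using a st by (simp add: psi)
    thus "\<psi> (SOME p. \<psi> p = y) = y" by (rule someI)
  qed
  have zero: "a = 0 \<and> b = 0 \<and> c = 0" if z: "a *s n + b *s m + c *s x = 0" for a b c
  proof -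
    have "br x (a *s n + b *s m + c *s x) = 0" using z by simp
    hence z1: "a *s n + b *s m = 0" by (simp add: brs tab)
    hence "c *s x = 0" using z by simp
    hence c: "c = 0" using x0 by simp
    have "br n (a *s n + b *s m) = 0" using z1 by simp
    hence "b = 0" using x0 by (simp add: brs tab)
    moreover have "br m (a *s n + b *s m) = 0" using z1 by simp
    hence "a = 0" using x0 by (simp add: brs tab)
    ultimately show ?thesis using c by simp
  qed
  have psi_add: "\<psi> (p + q) = \<psi> p + \<psi> q" for p q
    by (cases p, cases q) (simp add: psi algebra_simps)
  have psi_scl: "\<psi> (K_scale c p) = c *s \<psi> p" for c p
    by (cases p) (simp add: psi K_scale_def algebra_simps)
  have psi_br: "\<psi> (K_br p q) = br (\<psi> p) (\<psi> q)" for p q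
    by (cases p, cases q) (simp add: psi K_br_def fdiff brs tab algebra_simps)
  have inj: "inj \<psi>"
  proof (rule injI)
    fix p q assume e: "\<psi> p = \<psi> q"
    obtain a b c where p: "p = (a, b, c)" by (cases p) auto
    obtain a' b' c' where q: "q = (a', b', c')" by (cases q) auto
    have "(a - a') *s n + (b - b') *s m + (c - c') *s x = \<psi> p - \<psi> q"
      by (simp add: p q psi algebra_simps)
    hence "(a - a') *s n + (b - b') *s m + (c - c') *s x = 0" using e by simp
    from zero[OF this] show "p = q" by (simp add: p q)
  qed
  have bij: "bij \<psi>" using inj surj by (simp add: bij_def)
  define \<phi> where "\<phi> = inv \<psi>"
  have pp: "\<psi> (\<phi> y) = y" for y unfolding \<phi>_def using surj by (simp add: surj_f_inv_f)
  have pp2: "\<phi> (\<psi> p) = p" for p unfolding \<phi>_def using inj by simp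
  have vsK: "vector_space (K_scale :: 'f \<Rightarrow> 'f \<times> 'f \<times> 'f \<Rightarrow> 'f \<times> 'f \<times> 'f)"
    unfolding vector_space_def K_scale_def by (auto simp: algebra_simps split: prod.split)
  have lin: "Vector_Spaces.linear scl K_scale \<phi>"
    unfolding linear_iff
  proof (intro conjI allI vs_self vsK)
    fix u v
    have "\<phi> (u + v) = \<phi> (\<psi> (\<phi> u + \<phi> v))" by (simp add: psi_add pp)
    thus "\<phi> (u + v) = \<phi> u + \<phi> v" by (simp add: pp2)
  next
    fix c u
    have "\<phi> (c *s u) = \<phi> (\<psi> (K_scale c (\<phi> u)))" by (simp add: psi_scl pp)
    thus "\<phi> (c *s u) = K_scale c (\<phi> u)" by (simp add: pp2)
  qed
  have brc: "\<phi> (br u v) = K_br (\<phi> u) (\<phi> v)" for u v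
  proof -
    have "\<phi> (br u v) = \<phi> (\<psi> (K_br (\<phi> u) (\<phi> v)))" by (simp add: psi_br pp)
    thus ?thesis by (simp add: pp2)
  qed
  have bphi: "bij \<phi>" unfolding \<phi>_def by (rule bij_imp_bij_inv[OF bij])
  have Qeq: "Q = \<psi> ` {(0, 0, t) | t. True}"
  proof
    show "\<psi> ` {(0, 0, t) | t. True} \<subseteq> Q"
      using xQ subQ by (auto simp: psi subspace_scale)
  next
    show "Q \<subseteq> \<psi> ` {(0, 0, t) | t. True}"
    proof
      fix q assume q: "q \<in> Q"
      obtain a b c where abc: "\<psi> (a, b, c) = q" using surj by (metis surj_def prod_cases3)
      have q': "a *s n + b *s m \<in> Q"
      proof -
        have "q - c *s x \<in> Q" using q xQ subQ by (simp add: subspace_diff subspace_scale)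
        moreover have "q - c *s x = a *s n + b *s m" using abc psi[of a b c] by (metis add_diff_cancel_right')
        ultimately show ?thesis by simp
      qed
      have q'N: "a *s n + b *s m \<in> NN x" using n m NN_sub by (simp add: subspace_add subspace_scale)
      obtain s1 t1 where e1: "br (a *s n + b *s m) n = s1 *s (a *s n + b *s m) + t1 *s n"
        using PQ q' by blast
      have "s1 *s (a *s n + b *s m) + t1 *s n \<in> NN x" using q'N n NN_sub by (simp add: subspace_add subspace_scale)
      moreover have "br (a *s n + b *s m) n = b *s x" by (simp add: brs tab)
      ultimately have "b *s x \<in> NN x" using e1 by simp
      hence b: "b = 0" using NN_x[of b x] x0 by simp
      obtain s2 t2 where e2: "br (a *s n + b *s m) m = s2 *s (a *s n + b *s m) + t2 *s m"
        using PQ q' by blast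
      have "s2 *s (a *s n + b *s m) + t2 *s m \<in> NN x" using q'N m NN_sub by (simp add: subspace_add subspace_scale)
      moreover have "br (a *s n + b *s m) m = a *s x" by (simp add: brs tab)
      ultimately have "a *s x \<in> NN x" using e2 by simp
      hence a: "a = 0" using NN_x[of a x] x0 by simp
      show "q \<in> \<psi> ` {(0, 0, t) | t. True}" using abc a b by force
    qed
  qed
  have "\<phi> ` Q = {(0, 0, t) | t. True}" unfolding Qeq image_image pp2 by simp
  moreover have "lie_iso scl br K_scale K_br \<phi>" unfolding lie_iso_def using bphi lin brc by blast
  ultimately show ?thesis by blast
qed


lemma setsum_sub:
  assumes A: "subspace A" and B: "subspace B" shows "subspace (setsum A B)"
proof (rule subspaceI)
  have "(0::'v) = 0 + 0" by simp
  moreover have "(0::'v) \<in> A" "(0::'v) \<in> B" using A B by (simp_all add: subspace_0)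
  ultimately show "0 \<in> setsum A B" unfolding setsum_def by blast
next
  fix x y assume "x \<in> setsum A B" "y \<in> setsum A B"
  then obtain a1 b1 a2 b2 where e: "x = a1 + b1" "y = a2 + b2" and m: "a1 \<in> A" "a2 \<in> A" "b1 \<in> B" "b2 \<in> B"
    unfolding setsum_def by blast
  have "x + y = (a1 + a2) + (b1 + b2)" unfolding e by (simp add: algebra_simps)
  moreover have "a1 + a2 \<in> A" using A m by (simp add: subspace_add)
  moreover have "b1 + b2 \<in> B" using B m by (simp add: subspace_add)
  ultimately show "x + y \<in> setsum A B" unfolding setsum_def by blast
next
  fix c x assume "x \<in> setsum A B"
  then obtain a1 b1 where e: "x = a1 + b1" and m: "a1 \<in> A" "b1 \<in> B"
    unfolding setsum_def by blast
  have "c *s x = c *s a1 + c *s b1" unfolding e by (rule scale_right_distrib)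
  moreover have "c *s a1 \<in> A" using A m by (simp add: subspace_scale)
  moreover have "c *s b1 \<in> B" using B m by (simp add: subspace_scale)
  ultimately show "c *s x \<in> setsum A B" unfolding setsum_def by blast
qed

lemma dim1:
  assumes "subspace S" "dim S = 1"
  shows "\<exists>v\<in>S. S = span {v}"
proof -
  obtain B where B: "B \<subseteq> S" "independent B" "S \<subseteq> span B" "card B = dim S" by (rule basis_exists)
  have "card B = 1" using B(4) assms(2) by simp
  then obtain v where v: "B = {v}" by (rule card_1_singletonE)
  have "span {v} \<subseteq> S" using B(1) v assms(1) by (simp add: span_minimal)
  moreover have "v \<in> S" using B(1) v by simp
  ultimately show ?thesis using B(3) v by blast
qed

lemma main:
  assumes qi: "quasi_ideal scl br Q" and nU: "Q \<noteq> UNIV" and ms: "modular_star scl br Q"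
  shows "strong_quasi_ideal scl br Q \<and>
    (strong_ideal scl br Q \<or> almost_abelian scl br \<or>
     ((2::'f) = 0 \<and> (\<exists>\<phi>. lie_iso scl br K_scale K_br \<phi> \<and> \<phi> ` Q = {(0, 0, t) | t. True})))"
proof -
  have sQ: "subalgebra scl br Q" using qi by (simp add: quasi_ideal_def)
  hence subQ: "subspace Q" by (simp add: subalgebra_def)
  have PQ: "\<forall>q\<in>Q. \<forall>y. \<exists>s t. br q y = s *s q + t *s y" using step1[OF qi ms nU] by blast
  have sqi: "strong_quasi_ideal scl br Q"
    unfolding strong_quasi_ideal_def
  proof (intro conjI sQ allI impI, elim conjE)
    fix S assume sS: "subalgebra scl br S" and SQ: "S \<subseteq> Q" and d: "dim S = 1"
    obtain v where v: "v \<in> S" "S = span {v}" using dim1[of S] sS d unfolding subalgebra_def by blast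
    show "quasi_ideal scl br S" unfolding quasi_ideal_def
    proof (intro conjI sS allI impI)
      fix V assume sV: "subspace V"
      have sSV: "subspace (setsum S V)" using sS sV by (simp add: setsum_sub subalgebra_def)
      show "brset scl br S V \<subseteq> setsum S V" unfolding brset_def
      proof (rule span_minimal[OF _ sSV], clarify)
        fix a w assume a: "a \<in> S" and w: "w \<in> V"
        obtain k where k: "a = k *s v" using a v by (auto simp: span_singleton)
        obtain s t where st: "br v w = s *s v + t *s w" using PQ v SQ by blast
        have "br a w = (k * s) *s v + (k * t) *s w" using k st by (simp add: brs scale_right_distrib)
        moreover have "(k * s) *s v \<in> S" using v sS by (simp add: subalgebra_def subspace_scale)
        moreover have "(k * t) *s w \<in> V" using w sV by (simp add: subspace_scale)
        ultimately show "br a w \<in> setsum S V" by (auto simp: setsum_def)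
      qed
    qed
  qed
  show ?thesis
  proof (cases "\<forall>q\<in>Q. \<forall>y. br q y \<in> span {q}")
    case True
    have "strong_ideal scl br Q"
      unfolding strong_ideal_def
    proof (intro conjI sQ allI impI, elim conjE)
      fix S assume sS: "subalgebra scl br S" and SQ: "S \<subseteq> Q" and d: "dim S = 1"
      obtain v where v: "v \<in> S" "S = span {v}" using dim1[of S] sS d unfolding subalgebra_def by blast
      show "lie_ideal scl br S" unfolding lie_ideal_def
      proof (intro conjI sS)
        show "brset scl br S UNIV \<subseteq> S" unfolding brset_def
        proof (rule span_minimal, clarify)
          fix a w assume a: "a \<in> S"
          obtain k where k: "a = k *s v" using a v by (auto simp: span_singleton)
          have "br v w \<in> S" using True v SQ by blast
          hence "k *s br v w \<in> S" using sS by (simp add: subalgebra_def subspace_scale)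
          thus "br a w \<in> S" using k by (simp add: brs)
        next
          show "subspace S" using sS by (simp add: subalgebra_def)
        qed
      qed
    qed
    thus ?thesis using sqi by blast
  next
    case False
    then obtain x y0 where xQ: "x \<in> Q" and y0: "br x y0 \<notin> span {x}" by blast
    have x0: "x \<noteq> 0" using y0 by (auto simp: span_zero)
    obtain l where l: "l \<noteq> 0" "\<forall>y. \<exists>a. br x y = a *s x + l *s y"
      using step2[OF _ y0] PQ xQ by blast
    define x' where "x' = inverse l *s x"
    have H: "\<forall>y. \<exists>a. br x' y = a *s x' + y" unfolding x'_def by (rule normalize[OF l])
    have x'0: "x' \<noteq> 0" using x0 l by (simp add: x'_def)
    have x'Q: "x' \<in> Q" using xQ subQ by (simp add: x'_def subspace_scale)
    show ?thesis
    proof (cases "(2::'f) = 0")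
      case False
      have "\<forall>n\<in>NN x'. \<forall>m\<in>NN x'. br n m = 0"
      proof (intro ballI)
        fix n m assume "n \<in> NN x'" "m \<in> NN x'"
        then obtain c where c: "br n m = c *s x'" "c + c = 0" using L2[OF x'0 H] by blast
        have "2 * c = 0" using c(2) by (metis mult_2)
        hence "c = 0" using False by simp
        thus "br n m = 0" using c by simp
      qed
      thus ?thesis using L3[OF x'0 H] sqi by blast
    next
      case two: True
      show ?thesis
      proof (cases "\<forall>n\<in>NN x'. \<forall>m\<in>NN x'. br n m = 0")
        case True thus ?thesis using L3[OF x'0 H] sqi by blast
      next
        case False
        then obtain n m where n: "n \<in> NN x'" and m: "m \<in> NN x'" and nz: "br n m \<noteq> 0" by blast
        obtain c where c: "br n m = c *s x'" using L2[OF x'0 H n m] by blast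
        have c0: "c \<noteq> 0" using c nz by auto
        define m' where "m' = inverse c *s m"
        have m': "m' \<in> NN x'" using m NN_sub by (simp add: m'_def subspace_scale)
        have nm': "br n m' = x'" using c c0 by (simp add: m'_def brs)
        show ?thesis using L4[OF x'0 H two n m' nm' subQ x'Q PQ] sqi two by blast
      qed
    qed
  qed
qed

end
theorem proposition3p2:
  fixes scl :: "'f::field \<Rightarrow> 'v::ab_group_add \<Rightarrow> 'v"
    and br :: "'v \<Rightarrow> 'v \<Rightarrow> 'v"
    and Q :: "'v set"
  assumes "lie_algebra scl br"
    and "fin_dim scl"
    and "quasi_ideal scl br Q"
    and "Q \<noteq> UNIV"
    and "modular_star scl br Q"
  shows "strong_quasi_ideal scl br Q \<and>
    (strong_ideal scl br Q \<or> almost_abelian scl br \<or>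
     ((2::'f) = 0 \<and> (\<exists>\<phi>. lie_iso scl br K_scale K_br \<phi> \<and> \<phi> ` Q = {(0, 0, t) | t. True})))"
proof -
  have vs: "vector_space scl" using assms(1) unfolding lie_algebra_def by (elim conjE)
  interpret L: lieA scl br by (rule lieA.intro[OF vs lieA_axioms.intro[OF assms(1)]])
  show ?thesis by (rule L.main[OF assms(3) assms(4) assms(5)])
qed

end
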